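(* Let $(P,\preceq)$ be a poset, $\mathcal{X}:=\{X\subseteq P\mid (X,\preceq)\text{ well-ordered}\}$, $\Lambda$ a set, $\mathcal{I},\mathcal{O}\subseteq\Lambda$ finite disjoint sets, $s$ a causal $(\mathcal{I},\mathcal{O})$-system over $\mathcal{X}$, $i\in\mathcal{I}$, $o\in\mathcal{O}$. For $\mathbf{X}\in\mathcal{X}^{\mathcal{I}\setminus\{i\}}$ let $\phi(\mathbf{X})$ denote the unique $X_i\in\mathcal{X}$ with $s(\mathbf{X}\cup\{(i,X_i)\})(o)=X_i$. Then for all $\mathbf{X},\mathbf{X}'\in\mathcal{X}^{\mathcal{I}\setminus\{i\}}$ and all $y\in\phi(\mathbf{X})\mathbin{\triangle}\phi(\mathbf{X}')$ there exist $i'\in\mathcal{I}\setminus\{i\}$ and $x\in\mathbf{X}(i')\mathbin{\triangle}\mathbf{X}'(i')$ with $x\prec y$.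
   Context: $\mathcal{X}^{\mathcal{I}}$ is the set of functions $\mathcal{I}\to\mathcal{X}$. $\mathbin{\triangle}$ denotes symmetric difference; $x\prec y$ means $x\preceq y$ and $x\ne y$. A causal $(\mathcal{I},\mathcal{O})$-system over $\mathcal{X}$ is a function $s:\mathcal{X}^{\mathcal{I}}\to\mathcal{X}^{\mathcal{O}}$ such that for all $\mathbf{X},\mathbf{X}'\in\mathcal{X}^{\mathcal{I}}$, $o\in\mathcal{O}$, $y\in s(\mathbf{X})(o)\mathbin{\triangle}s(\mathbf{X}')(o)$ there exist $i\in\mathcal{I}$ and $x\in\mathbf{X}(i)\mathbin{\triangle}\mathbf{X}'(i)$ with $x\prec y$. (For such systems the fixed point $\phi(\mathbf{X})$ exists and is unique.) *)

theory Defs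
  imports "HOL-Library.FuncSet"
begin

text \<open>The poset (P, \<preceq>) is the type 'p with its order; x \<prec> y is x < y.\<close>

definition well_ordered_subset :: "'p::order set \<Rightarrow> bool" where
  "well_ordered_subset X \<longleftrightarrow>
     (\<forall>x\<in>X. \<forall>y\<in>X. x \<le> y \<or> y \<le> x) \<and>
     (\<forall>S. S \<subseteq> X \<longrightarrow> S \<noteq> {} \<longrightarrow> (\<exists>m\<in>S. \<forall>z\<in>S. m \<le> z))"

definition symdiff :: "'a set \<Rightarrow> 'a set \<Rightarrow> 'a set" (infixl "\<triangle>" 65) where
  "A \<triangle> B = (A - B) \<union> (B - A)"

definition WO :: "'p::order set set" where
  "WO = {X. well_ordered_subset X}"

text \<open>Assignments in \<X>^I are extensional functions I \<rightarrow> \<X>.\<close>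
definition causal_system ::
  "'l set \<Rightarrow> 'l set \<Rightarrow> (('l \<Rightarrow> 'p::order set) \<Rightarrow> ('l \<Rightarrow> 'p set)) \<Rightarrow> bool" where
  "causal_system Inp Outp s \<longleftrightarrow>
     (\<forall>X \<in> Inp \<rightarrow>\<^sub>E WO. s X \<in> Outp \<rightarrow>\<^sub>E WO) \<and>
     (\<forall>X \<in> Inp \<rightarrow>\<^sub>E WO. \<forall>X' \<in> Inp \<rightarrow>\<^sub>E WO. \<forall>ob\<in>Outp. \<forall>y \<in> s X ob \<triangle> s X' ob.
        \<exists>i\<in>Inp. \<exists>x \<in> X i \<triangle> X' i. x < y)"

definition fixpt ::
  "(('l \<Rightarrow> 'p::order set) \<Rightarrow> ('l \<Rightarrow> 'p set)) \<Rightarrow> 'l \<Rightarrow> 'l \<Rightarrow> ('l \<Rightarrow> 'p set) \<Rightarrow> 'p set" where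
  "fixpt s i ob X = (THE Xi. Xi \<in> WO \<and> s (X(i := Xi)) ob = Xi)"

end

theory Submission
  imports Defs
begin

lemma WO_sub: "A \<in> WO \<Longrightarrow> B \<subseteq> A \<Longrightarrow> B \<in> WO"
  unfolding WO_def well_ordered_subset_def by (simp, blast)

lemma WO_tot: "A \<in> WO \<Longrightarrow> x \<in> A \<Longrightarrow> y \<in> A \<Longrightarrow> x \<le> y \<or> y \<le> x"
  unfolding WO_def well_ordered_subset_def by blast

lemma WO_min: "A \<in> WO \<Longrightarrow> S \<subseteq> A \<Longrightarrow> S \<noteq> {} \<Longrightarrow> \<exists>m\<in>S. \<forall>z\<in>S. m \<le> z"
  unfolding WO_def well_ordered_subset_def by blast

lemma WO_wf:
  fixes A B :: "'p::order set"
  assumes "A \<in> WO" "B \<in> WO" "S \<subseteq> A \<union> B" "S \<noteq> {}"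
  shows "\<exists>m\<in>S. \<forall>z\<in>S. \<not> z < m"
proof (cases "S \<inter> A = {}")
  case True
  then have "S \<subseteq> B" using assms by blast
  then obtain m where "m \<in> S" "\<forall>z\<in>S. m \<le> z" using WO_min[OF assms(2)] assms(4) by blast
  then show ?thesis by (meson leD)
next
  case False
  then obtain m where m: "m \<in> S \<inter> A" "\<forall>z\<in>S \<inter> A. m \<le> z" using WO_min[OF assms(1), of "S \<inter> A"] by blast
  show ?thesis
  proof (cases "\<forall>z\<in>S. \<not> z < m")
    case True then show ?thesis using m by blast
  next
    case False
    define T where "T = {t\<in>S. t < m}"
    have "T \<noteq> {}" using False T_def by blast
    have "T \<subseteq> B" using m assms(3) T_def by (auto dest: leD)
    then obtain m' where m': "m' \<in> T" "\<forall>z\<in>T. m' \<le> z" using WO_min[OF assms(2)] \<open>T \<noteq> {}\<close> by blast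
    have "\<forall>z\<in>S. \<not> z < m'"
    proof (intro ballI notI)
      fix z assume "z \<in> S" "z < m'"
      then have "z \<in> T" using m' T_def by auto
      then show False using m' \<open>z < m'\<close> by (meson leD)
    qed
    then show ?thesis using m' T_def by blast
  qed
qed

lemma descent:
  fixes Z Z' :: "'p::order set"
  assumes "Z \<in> WO" "Z' \<in> WO"
    and H: "\<forall>y\<in>Z \<triangle> Z'. P y \<or> (\<exists>x\<in>Z \<triangle> Z'. x < y)"
    and up: "\<And>x y. P x \<Longrightarrow> x < y \<Longrightarrow> P y"
  shows "\<forall>y\<in>Z \<triangle> Z'. P y"
proof (rule ccontr)
  assume nt: "\<not> (\<forall>y\<in>Z \<triangle> Z'. P y)"
  define D where "D = {y\<in>Z \<triangle> Z'. \<not> P y}"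
  have "D \<noteq> {}" "D \<subseteq> Z \<union> Z'" using nt D_def by (auto simp: symdiff_def)
  then obtain m where m: "m \<in> D" "\<forall>z\<in>D. \<not> z < m" using WO_wf[OF assms(1,2)] by blast
  then obtain x where x: "x \<in> Z \<triangle> Z'" "x < m" using H D_def by blast
  show False
  proof (cases "P x")
    case True then show False using up x m D_def by blast
  next
    case False then have "x \<in> D" using x D_def by blast
    then show False using m x by blast
  qed
qed

locale causalF =
  fixes F :: "'p::order set \<Rightarrow> 'p set"
  assumes FWO: "\<And>Z. Z \<in> WO \<Longrightarrow> F Z \<in> WO"
    and C: "\<And>Z Z' y. Z \<in> WO \<Longrightarrow> Z' \<in> WO \<Longrightarrow> y \<in> F Z \<triangle> F Z' \<Longrightarrow> \<exists>x\<in>Z \<triangle> Z'. x < y"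
begin

lemma agree:
  assumes "A \<in> WO" "B \<in> WO" "{a\<in>A. a < y} = {b\<in>B. b < y}"
  shows "y \<in> F A \<longleftrightarrow> y \<in> F B"
proof (rule ccontr)
  assume "\<not> ?thesis"
  then have "y \<in> F A \<triangle> F B" by (auto simp: symdiff_def)
  then obtain x where "x \<in> A \<triangle> B" "x < y" using C assms by blast
  then show False using assms(3) by (auto simp: symdiff_def)
qed

definition good where
  "good A \<longleftrightarrow> A \<in> WO \<and> A \<subseteq> F A \<and> (\<forall>y\<in>F A. \<forall>a\<in>A. y < a \<longrightarrow> y \<in> A)"

lemma one_side:
  assumes gA: "good A" and gB: "good B" and y: "y \<in> A" "y \<notin> B"
    and mn: "\<forall>z\<in>A \<triangle> B. \<not> z < y"
  shows "B = {a\<in>A. a < y}"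
proof -
  have AWO: "A \<in> WO" and BWO: "B \<in> WO" using gA gB good_def by auto
  have eq: "{a\<in>A. a < y} = {b\<in>B. b < y}" using mn by (auto simp: symdiff_def)
  have "y \<in> F A" using gA y good_def by blast
  then have yFB: "y \<in> F B" using agree[OF AWO BWO eq] by blast
  have "B \<subseteq> {b\<in>B. b < y}"
  proof
    fix b assume b: "b \<in> B"
    have "b \<in> F B" using gB b good_def by blast
    then have "b \<le> y \<or> y \<le> b" using WO_tot[OF FWO[OF BWO]] yFB by blast
    moreover have "\<not> y < b" using gB yFB b y(2) good_def by blast
    moreover have "b \<noteq> y" using b y by blast
    ultimately show "b \<in> {b\<in>B. b < y}" using b by (auto simp: order.order_iff_strict)
  qed
  then show ?thesis using eq by blast
qed

lemma chain:
  assumes gA: "good A" and gB: "good B" and ne: "A \<noteq> B"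
  shows "(\<exists>y\<in>A. B = {a\<in>A. a < y}) \<or> (\<exists>y\<in>B. A = {b\<in>B. b < y})"
proof -
  have AWO: "A \<in> WO" and BWO: "B \<in> WO" using gA gB good_def by auto
  have "A \<triangle> B \<noteq> {}" "A \<triangle> B \<subseteq> A \<union> B" using ne by (auto simp: symdiff_def)
  then obtain y where y: "y \<in> A \<triangle> B" "\<forall>z\<in>A \<triangle> B. \<not> z < y" using WO_wf[OF AWO BWO] by blast
  show ?thesis
  proof (cases "y \<in> A")
    case True
    then have "y \<notin> B" using y(1) by (auto simp: symdiff_def)
    then show ?thesis using one_side[OF gA gB True] y(2) True by blast
  next
    case False
    then have "y \<in> B" using y(1) by (auto simp: symdiff_def)
    moreover have "\<forall>z\<in>B \<triangle> A. \<not> z < y" using y(2) by (auto simp: symdiff_def)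
    ultimately show ?thesis using one_side[OF gB gA _ False] by blast
  qed
qed

lemma good_sub: "good A \<Longrightarrow> good B \<Longrightarrow> A \<subseteq> B \<or> B \<subseteq> A"
  using chain by blast

lemma good_down:
  assumes "good A" "good B" "A \<subseteq> B" "b \<in> B" "a \<in> A" "b < a"
  shows "b \<in> A"
proof (cases "A = B")
  case True then show ?thesis using assms by blast
next
  case False
  from chain[OF assms(1,2) False] show ?thesis
  proof
    assume "\<exists>y\<in>A. B = {a\<in>A. a < y}"
    then show ?thesis using assms by blast
  next
    assume "\<exists>y\<in>B. A = {b\<in>B. b < y}"
    then obtain y where "A = {b\<in>B. b < y}" by blast
    then show ?thesis using assms by (auto dest: order.strict_trans)
  qed
qed

definition U where "U = \<Union>{A. good A}"

lemma U_WO: "U \<in> WO"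
proof -
  have tot: "\<forall>x\<in>U. \<forall>y\<in>U. x \<le> y \<or> y \<le> x"
  proof (intro ballI)
    fix x y assume "x \<in> U" "y \<in> U"
    then obtain A B where "good A" "good B" "x \<in> A" "y \<in> B" using U_def by blast
    then show "x \<le> y \<or> y \<le> x" using good_sub[of A B] WO_tot good_def by blast
  qed
  have mn: "\<forall>S. S \<subseteq> U \<longrightarrow> S \<noteq> {} \<longrightarrow> (\<exists>m\<in>S. \<forall>z\<in>S. m \<le> z)"
  proof (intro allI impI)
    fix S assume S: "S \<subseteq> U" "S \<noteq> {}"
    then obtain s where "s \<in> S" by blast
    then obtain A where A: "good A" "s \<in> A" using S U_def by blast
    then obtain m where m: "m \<in> S \<inter> A" "\<forall>z\<in>S \<inter> A. m \<le> z"
      using WO_min[of A "S \<inter> A"] good_def \<open>s \<in> S\<close> by blast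
    have "\<forall>z\<in>S. m \<le> z"
    proof
      fix z assume z: "z \<in> S"
      then obtain B where B: "good B" "z \<in> B" using S U_def by blast
      show "m \<le> z"
      proof (rule ccontr)
        assume nz: "\<not> m \<le> z"
        have "m \<le> z \<or> z \<le> m"
          using good_sub[OF A(1) B(1)] WO_tot A B m good_def by blast
        then have zm: "z < m" using nz by (auto simp: order.order_iff_strict)
        have "z \<in> A"
          using good_sub[OF A(1) B(1)] good_down[OF A(1) B(1) _ B(2) _ zm] m B by blast
        then show False using m z nz by blast
      qed
    qed
    then show "\<exists>m\<in>S. \<forall>z\<in>S. m \<le> z" using m by blast
  qed
  show ?thesis using tot mn unfolding WO_def well_ordered_subset_def by blast
qed

lemma U_good: "good U"
proof -
  have sub: "U \<subseteq> F U"
  proof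
    fix u assume "u \<in> U"
    then obtain A where A: "good A" "u \<in> A" using U_def by blast
    have AU: "A \<subseteq> U" using A U_def by blast
    have "{a\<in>A. a < u} = {b\<in>U. b < u}"
    proof -
      have "\<And>b. b \<in> U \<Longrightarrow> b < u \<Longrightarrow> b \<in> A"
      proof -
        fix b assume "b \<in> U" "b < u"
        then obtain B where "good B" "b \<in> B" using U_def by blast
        then show "b \<in> A" using good_sub[OF A(1)] good_down[OF A(1)] A \<open>b < u\<close> by blast
      qed
      then show ?thesis using AU by blast
    qed
    moreover have "u \<in> F A" using A good_def by blast
    ultimately show "u \<in> F U" using agree[OF _ U_WO] A good_def by blast
  qed
  have ini: "\<forall>y\<in>F U. \<forall>a\<in>U. y < a \<longrightarrow> y \<in> U"
  proof (intro ballI impI)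
    fix y a assume y: "y \<in> F U" and a: "a \<in> U" "y < a"
    then obtain A where A: "good A" "a \<in> A" using U_def by blast
    have AU: "A \<subseteq> U" using A U_def by blast
    have "{a\<in>A. a < y} = {b\<in>U. b < y}"
    proof -
      have "\<And>b. b \<in> U \<Longrightarrow> b < y \<Longrightarrow> b \<in> A"
      proof -
        fix b assume "b \<in> U" "b < y"
        then have "b < a" using a(2) by (meson order.strict_trans)
        obtain B where "good B" "b \<in> B" using \<open>b \<in> U\<close> U_def by blast
        then show "b \<in> A" using good_sub[OF A(1)] good_down[OF A(1)] A \<open>b < a\<close> by blast
      qed
      then show ?thesis using AU by blast
    qed
    then have "y \<in> F A" using agree[OF _ U_WO] A good_def y by blast
    then have "y \<in> A" using A a good_def by blast
    then show "y \<in> U" using AU by blast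
  qed
  show ?thesis using sub ini U_WO good_def by blast
qed

lemma exists_fix: "\<exists>Z\<in>WO. F Z = Z"
proof -
  have "F U \<subseteq> U"
  proof (rule ccontr)
    assume "\<not> F U \<subseteq> U"
    then have "F U - U \<noteq> {}" by blast
    then obtain y where y: "y \<in> F U - U" "\<forall>z\<in>F U - U. y \<le> z"
      using WO_min[OF FWO[OF U_WO], of "F U - U"] by blast
    have gU: "good U" by (rule U_good)
    have lt: "\<forall>u\<in>U. u < y"
    proof
      fix u assume u: "u \<in> U"
      have "u \<in> F U" using gU u good_def by blast
      then have "u \<le> y \<or> y \<le> u" using WO_tot[OF FWO[OF U_WO]] y by blast
      moreover have "\<not> y < u" using gU y u good_def by blast
      moreover have "u \<noteq> y" using u y by blast
      ultimately show "u < y" by (auto simp: order.order_iff_strict)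
    qed
    define A where "A = insert y U"
    have AWO: "A \<in> WO" using WO_sub[OF FWO[OF U_WO]] A_def y gU good_def by blast
    have agz: "\<And>z. \<not> y < z \<Longrightarrow> z \<in> F A \<longleftrightarrow> z \<in> F U"
    proof -
      fix z assume "\<not> y < z"
      then have "{a\<in>A. a < z} = {b\<in>U. b < z}" using A_def by auto
      then show "z \<in> F A \<longleftrightarrow> z \<in> F U" using agree[OF AWO U_WO] by blast
    qed
    have "A \<subseteq> F A"
    proof
      fix a assume "a \<in> A"
      then have "a = y \<or> a \<in> U" using A_def by blast
      then show "a \<in> F A"
      proof
        assume "a = y" then show ?thesis using agz y by blast
      next
        assume aU: "a \<in> U"
        then have "\<not> y < a" using lt by (meson order.asym)
        then show ?thesis using agz gU aU good_def by blast
      qed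
    qed
    moreover have "\<forall>z\<in>F A. \<forall>a\<in>A. z < a \<longrightarrow> z \<in> A"
    proof (intro ballI impI)
      fix z a assume z: "z \<in> F A" and a: "a \<in> A" "z < a"
      have "z < y"
      proof (cases "a = y")
        case True then show ?thesis using a by simp
      next
        case False then have "a < y" using a lt A_def by blast
        then show ?thesis using a(2) by (meson order.strict_trans)
      qed
      then have "\<not> y < z" by (meson order.asym)
      then have "z \<in> F U" using agz z by blast
      show "z \<in> A"
      proof (rule ccontr)
        assume "z \<notin> A"
        then have "z \<in> F U - U" using \<open>z \<in> F U\<close> A_def by blast
        then have "y \<le> z" using y by blast
        then show False using \<open>z < y\<close> by (meson leD)
      qed
    qed
    ultimately have "good A" using AWO good_def by blast
    then have "y \<in> U" using A_def U_def by blast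
    then show False using y by blast
  qed
  then have "F U = U" using U_good good_def by blast
  then show ?thesis using U_WO by blast
qed

lemma unique_fix:
  assumes "Z \<in> WO" "Z' \<in> WO" "F Z = Z" "F Z' = Z'"
  shows "Z = Z'"
proof -
  have H: "\<forall>y\<in>Z \<triangle> Z'. False \<or> (\<exists>x\<in>Z \<triangle> Z'. x < y)"
    using C[OF assms(1,2)] assms(3,4) by simp
  have "\<forall>y\<in>Z \<triangle> Z'. False" using descent[OF assms(1,2) H] by blast
  then show ?thesis by (auto simp: symdiff_def)
qed

lemma the_fix:
  assumes "Z \<in> WO" "F Z = Z"
  shows "(THE Xi. Xi \<in> WO \<and> F Xi = Xi) = Z"
  using assms unique_fix by (intro the_equality) auto

end

theorem lemma6p5:
  fixes Inp Outp :: "'l set"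
    and s :: "('l \<Rightarrow> 'p::order set) \<Rightarrow> ('l \<Rightarrow> 'p set)"
    and i ob :: 'l
  assumes "finite Inp" and "finite Outp" and "Inp \<inter> Outp = {}"
    and "causal_system Inp Outp s"
    and "i \<in> Inp" and "ob \<in> Outp"
    and "X \<in> (Inp - {i}) \<rightarrow>\<^sub>E WO" and "X' \<in> (Inp - {i}) \<rightarrow>\<^sub>E WO"
    and "y \<in> fixpt s i ob X \<triangle> fixpt s i ob X'"
  shows "\<exists>i' \<in> Inp - {i}. \<exists>x \<in> X i' \<triangle> X' i'. x < y"
proof -
  have cs1: "\<And>X. X \<in> Inp \<rightarrow>\<^sub>E WO \<Longrightarrow> s X \<in> Outp \<rightarrow>\<^sub>E WO"
    using assms(4) unfolding causal_system_def by blast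
  have cs2: "\<And>X X' y. X \<in> Inp \<rightarrow>\<^sub>E WO \<Longrightarrow> X' \<in> Inp \<rightarrow>\<^sub>E WO \<Longrightarrow> y \<in> s X ob \<triangle> s X' ob
      \<Longrightarrow> \<exists>j\<in>Inp. \<exists>x \<in> X j \<triangle> X' j. x < y"
    using assms(4,6) unfolding causal_system_def by blast
  have upd: "\<And>Y Z. Y \<in> (Inp - {i}) \<rightarrow>\<^sub>E WO \<Longrightarrow> Z \<in> WO \<Longrightarrow> Y(i := Z) \<in> Inp \<rightarrow>\<^sub>E WO"
    using assms(5) by (auto simp: PiE_def extensional_def Pi_def)
  have loc: "causalF (\<lambda>Z. s (Y(i := Z)) ob)" if Y: "Y \<in> (Inp - {i}) \<rightarrow>\<^sub>E WO" for Y
  proof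
    fix Z :: "'p set" assume "Z \<in> WO"
    then show "s (Y(i := Z)) ob \<in> WO" using cs1[OF upd[OF Y]] assms(6) by blast
  next
    fix Z Z' :: "'p set" and y assume Z: "Z \<in> WO" "Z' \<in> WO" "y \<in> s (Y(i := Z)) ob \<triangle> s (Y(i := Z')) ob"
    then obtain j x where "j \<in> Inp" "x \<in> (Y(i := Z)) j \<triangle> (Y(i := Z')) j" "x < y"
      using cs2[OF upd[OF Y Z(1)] upd[OF Y Z(2)]] by blast
    then show "\<exists>x\<in>Z \<triangle> Z'. x < y" by (cases "j = i") (auto simp: symdiff_def)
  qed
  obtain Z where Z: "Z \<in> WO" "s (X(i := Z)) ob = Z"
    using causalF.exists_fix[OF loc[OF assms(7)]] by blast
  obtain Z' where Z': "Z' \<in> WO" "s (X'(i := Z')) ob = Z'"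
    using causalF.exists_fix[OF loc[OF assms(8)]] by blast
  have fZ: "fixpt s i ob X = Z"
    unfolding fixpt_def using causalF.the_fix[OF loc[OF assms(7)] Z] .
  have fZ': "fixpt s i ob X' = Z'"
    unfolding fixpt_def using causalF.the_fix[OF loc[OF assms(8)] Z'] .
  define P where "P = (\<lambda>y. \<exists>i' \<in> Inp - {i}. \<exists>x \<in> X i' \<triangle> X' i'. x < y)"
  have H: "\<forall>y\<in>Z \<triangle> Z'. P y \<or> (\<exists>x\<in>Z \<triangle> Z'. x < y)"
  proof
    fix y assume "y \<in> Z \<triangle> Z'"
    then have "y \<in> s (X(i := Z)) ob \<triangle> s (X'(i := Z')) ob" using Z Z' by simp
    then obtain j x where j: "j \<in> Inp" "x \<in> (X(i := Z)) j \<triangle> (X'(i := Z')) j" "x < y"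
      using cs2[OF upd[OF assms(7) Z(1)] upd[OF assms(8) Z'(1)]] by blast
    show "P y \<or> (\<exists>x\<in>Z \<triangle> Z'. x < y)"
    proof (cases "j = i")
      case True then show ?thesis using j by auto
    next
      case False then show ?thesis using j P_def by auto
    qed
  qed
  have up: "\<And>x y. P x \<Longrightarrow> x < y \<Longrightarrow> P y" unfolding P_def using order.strict_trans by blast
  have "\<forall>y\<in>Z \<triangle> Z'. P y" using descent[OF Z(1) Z'(1) H up] .
  then show ?thesis using assms(9) fZ fZ' P_def by blast
qed

end
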